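(* Let $\Phi=\{\varphi_n\}_{n=1}^N\subseteq\mathbb{R}^M$ and let $\mathcal{A}\colon\mathbb{R}^M/\{\pm1\}\to\mathbb{R}^N$ be defined by $(\mathcal{A}(x))(n):=|\langle x,\varphi_n\rangle|^2$. Suppose $\Phi$ spans $\mathbb{R}^M$ and each $\varphi_n$ is nonzero. Then $\mathcal{A}$ is almost injective if and only if for each nonempty proper subset $S\subseteq\{1,\ldots,N\}$, the Minkowski sum $\operatorname{span}(\Phi_S)^\perp+\operatorname{span}(\Phi_{S^\mathrm{c}})^\perp$ is a proper subspace of $\mathbb{R}^M$.
   Context: For $S\subseteq\{1,\ldots,N\}$, $\Phi_S:=\{\varphi_n\}_{n\in S}$ and $S^\mathrm{c}$ is the complement of $S$ in $\{1,\ldots,N\}$. The map $\mathcal{A}$ is called almost injective if $\mathcal{A}^{-1}(\mathcal{A}(x))=\{\pm x\}$ for (Lebesgue) almost every $x\in\mathbb{R}^M$. *)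

theory Defs
  imports "HOL-Analysis.Analysis"
begin

definition intensity_map :: "nat \<Rightarrow> (nat \<Rightarrow> real ^ 'm) \<Rightarrow> real ^ 'm \<Rightarrow> (nat \<Rightarrow> real)" where
  "intensity_map N phi x = (\<lambda>n. if n \<in> {1..N} then \<bar>x \<bullet> phi n\<bar>^2 else 0)"

definition almost_injective :: "nat \<Rightarrow> (nat \<Rightarrow> real ^ 'm) \<Rightarrow> bool" where
  "almost_injective N phi \<longleftrightarrow>
     (AE x in lebesgue. {y. intensity_map N phi y = intensity_map N phi x} = {x, - x})"

end

theory Submission
  imports Defs
begin

lemma neg_proper_subspace:
  fixes V :: "'a::euclidean_space set"
  assumes "subspace V" "V \<noteq> UNIV"
  shows "negligible V"
proof -
  have "span V = V" using assms(1) by (simp add: span_eq_iff)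
  then have "dim V \<noteq> DIM('a)" using assms dim_eq_full by metis
  moreover have "dim V \<le> DIM('a)" by (metis dim_subset_UNIV)
  ultimately show ?thesis by (intro negligible_lowdim) simp
qed

lemma in_orth_span:
  fixes v :: "'a::real_inner"
  assumes "\<forall>n\<in>I. v \<bullet> phi n = 0"
  shows "v \<in> orthogonal_comp (span (phi ` I))"
  unfolding orthogonal_comp_def
proof (safe)
  fix y assume "y \<in> span (phi ` I)"
  then have "orthogonal v y"
    by (rule orthogonal_to_span) (use assms in \<open>auto simp: orthogonal_def\<close>)
  then show "orthogonal y v" by (simp add: orthogonal_commute)
qed

lemma orth_span_D:
  fixes v :: "'a::real_inner"
  assumes "v \<in> orthogonal_comp (span (phi ` I))" "n \<in> I"
  shows "v \<bullet> phi n = 0"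
  using assms span_base[of "phi n" "phi ` I"]
  by (auto simp: orthogonal_comp_def orthogonal_def inner_commute)

lemma imap_eq:
  "intensity_map N phi y = intensity_map N phi x \<longleftrightarrow>
    (\<forall>n\<in>{1..N}. y \<bullet> phi n = x \<bullet> phi n \<or> y \<bullet> phi n = - (x \<bullet> phi n))"
proof -
  have "intensity_map N phi y = intensity_map N phi x \<longleftrightarrow>
     (\<forall>n\<in>{1..N}. \<bar>y \<bullet> phi n\<bar>^2 = \<bar>x \<bullet> phi n\<bar>^2)"
    unfolding intensity_map_def by (auto simp: fun_eq_iff)
  also have "\<dots> \<longleftrightarrow> (\<forall>n\<in>{1..N}. y \<bullet> phi n = x \<bullet> phi n \<or> y \<bullet> phi n = - (x \<bullet> phi n))"
    by (simp add: power2_eq_iff)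
  finally show ?thesis .
qed

theorem theorem10:
  fixes N :: nat and phi :: "nat \<Rightarrow> real ^ 'm"
  assumes "span (phi ` {1..N}) = UNIV"
    and "\<forall>n\<in>{1..N}. phi n \<noteq> 0"
  shows "almost_injective N phi \<longleftrightarrow>
    (\<forall>S. S \<subseteq> {1..N} \<and> S \<noteq> {} \<and> S \<noteq> {1..N} \<longrightarrow>
       {a + b | a b. a \<in> orthogonal_comp (span (phi ` S)) \<and>
                      b \<in> orthogonal_comp (span (phi ` ({1..N} - S)))} \<noteq> UNIV)"
    (is "_ \<longleftrightarrow> (\<forall>S. ?P S \<longrightarrow> ?Sum S \<noteq> UNIV)")
proof
  assume AI: "almost_injective N phi"
  show "\<forall>S. ?P S \<longrightarrow> ?Sum S \<noteq> UNIV"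
  proof (intro allI impI notI)
    fix S assume PS: "?P S" and SU: "?Sum S = UNIV"
    define V where "V = orthogonal_comp (span (phi ` S))"
    define W where "W = orthogonal_comp (span (phi ` ({1..N} - S)))"
    have nV: "V \<noteq> UNIV"
    proof
      assume "V = UNIV"
      from PS obtain n where n: "n \<in> S" by auto
      then have "phi n \<bullet> phi n = 0" using orth_span_D[of "phi n" phi S n] \<open>V = UNIV\<close>
        by (simp add: V_def)
      then show False using assms(2) PS n by auto
    qed
    have nW: "W \<noteq> UNIV"
    proof
      assume "W = UNIV"
      from PS obtain n where n: "n \<in> {1..N} - S" by blast
      then have "phi n \<bullet> phi n = 0" using orth_span_D[of "phi n" phi "{1..N} - S" n] \<open>W = UNIV\<close>
        by (simp add: W_def)
      then show False using assms(2) PS n by auto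
    qed
    have negV: "negligible V" using nV by (intro neg_proper_subspace) (simp_all add: V_def subspace_orthogonal_comp)
    have negW: "negligible W" using nW by (intro neg_proper_subspace) (simp_all add: W_def subspace_orthogonal_comp)
    from AI obtain N0 where N0: "{x \<in> space lebesgue. \<not> {y. intensity_map N phi y = intensity_map N phi x} = {x, - x}} \<subseteq> N0"
      "emeasure lebesgue N0 = 0" "N0 \<in> sets lebesgue"
      unfolding almost_injective_def by (rule AE_E)
    have negN0: "negligible N0" using N0 by (simp add: negligible_iff_null_sets null_sets_def)
    have "UNIV \<subseteq> N0 \<union> V \<union> W"
    proof
      fix x :: "real ^ 'm"
      show "x \<in> N0 \<union> V \<union> W"
      proof (cases "x \<in> V \<union> W")
        case False
        have "x \<in> ?Sum S" using SU by simp
        then obtain a b where ab: "x = a + b" "a \<in> V" "b \<in> W" by (auto simp: V_def W_def)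
        have a0: "a \<noteq> 0" using ab False by auto
        have b0: "b \<noteq> 0" using ab False by auto
        have "intensity_map N phi (b - a) = intensity_map N phi x"
          unfolding imap_eq
        proof
          fix n assume n: "n \<in> {1..N}"
          show "(b - a) \<bullet> phi n = x \<bullet> phi n \<or> (b - a) \<bullet> phi n = - (x \<bullet> phi n)"
          proof (cases "n \<in> S")
            case True
            then have "a \<bullet> phi n = 0" using ab orth_span_D[of a phi S n] by (simp add: V_def)
            then show ?thesis by (simp add: ab inner_diff_left inner_add_left)
          next
            case False
            then have "b \<bullet> phi n = 0" using ab n orth_span_D[of b phi "{1..N} - S" n] by (simp add: W_def)
            then show ?thesis by (simp add: ab inner_diff_left inner_add_left)
          qed
        qed
        moreover have "b - a \<noteq> x"
        proof
          assume "b - a = x"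
          then have "a + a = 0" using ab by (simp add: algebra_simps)
          then have "(2::real) *\<^sub>R a = 0" by (simp add: scaleR_2)
          then show False using a0 by simp
        qed
        moreover have "b - a \<noteq> - x"
        proof
          assume "b - a = - x"
          then have "b + b = 0" using ab by (simp add: algebra_simps)
          then have "(2::real) *\<^sub>R b = 0" by (simp add: scaleR_2)
          then show False using b0 by simp
        qed
        ultimately have "\<not> {y. intensity_map N phi y = intensity_map N phi x} = {x, - x}" by blast
        then show ?thesis using N0(1) by auto
      qed auto
    qed
    then have "negligible (UNIV :: (real^'m) set)"
      using negN0 negV negW negligible_subset negligible_Un by metis
    then show False by simp
  qed
next
  assume H: "\<forall>S. ?P S \<longrightarrow> ?Sum S \<noteq> UNIV"
  define B where "B = \<Union>(?Sum ` {S. ?P S})"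
  have negB: "negligible B"
    unfolding B_def
  proof (rule negligible_Union)
    show "finite (?Sum ` {S. ?P S})" by (rule finite_imageI) (auto intro: finite_subset)
    show "negligible T" if "T \<in> ?Sum ` {S. ?P S}" for T
    proof -
      from that
      obtain S where "?P S" "T = ?Sum S" by auto
      then have "T \<noteq> UNIV" using H by blast
      then show "negligible T" using \<open>T = ?Sum S\<close>
        neg_proper_subspace[OF subspace_sums[OF subspace_orthogonal_comp subspace_orthogonal_comp]] by simp
    qed
  qed
  show "almost_injective N phi"
    unfolding almost_injective_def
  proof (rule AE_I')
    show "B \<in> null_sets lebesgue" using negB by (simp add: negligible_iff_null_sets)
    show "{x \<in> space lebesgue. \<not> {y. intensity_map N phi y = intensity_map N phi x} = {x, - x}} \<subseteq> B"
    proof (intro subsetI, elim CollectE conjE)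
      fix x :: "real ^ 'm"
      assume "x \<in> space lebesgue"
      assume ne: "\<not> {y. intensity_map N phi y = intensity_map N phi x} = {x, - x}"
      have "intensity_map N phi (- x) = intensity_map N phi x" unfolding imap_eq by auto
      then have "{x, - x} \<subseteq> {y. intensity_map N phi y = intensity_map N phi x}" by simp
      with ne obtain y where "y \<in> {y. intensity_map N phi y = intensity_map N phi x}" "y \<notin> {x, - x}"
        by (metis subset_antisym subsetI)
      then have y: "intensity_map N phi y = intensity_map N phi x" "y \<noteq> x" "y \<noteq> - x" by auto
      define S where "S = {n\<in>{1..N}. (x - y) \<bullet> phi n = 0}"
      have yn: "\<forall>n\<in>{1..N}. y \<bullet> phi n = x \<bullet> phi n \<or> y \<bullet> phi n = - (x \<bullet> phi n)"
        using y(1) unfolding imap_eq .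
      have u: "(1/2) *\<^sub>R (x - y) \<in> orthogonal_comp (span (phi ` S))"
        by (rule in_orth_span) (auto simp: S_def)
      have v: "(1/2) *\<^sub>R (x + y) \<in> orthogonal_comp (span (phi ` ({1..N} - S)))"
        by (rule in_orth_span) (use yn in \<open>auto simp: S_def inner_diff_left inner_add_left\<close>)
      have "S \<noteq> {}"
      proof
        assume "S = {}"
        then have "(1/2) *\<^sub>R (x + y) \<in> orthogonal_comp (span (phi ` {1..N}))"
          using v by simp
        then have "((1/2) *\<^sub>R (x + y)) \<bullet> ((1/2) *\<^sub>R (x + y)) = 0" using assms(1)
          by (auto simp: orthogonal_comp_def orthogonal_def)
        then have "x + y = 0" by simp
        then have "y = - x" by (simp add: add_eq_0_iff)
        then show False using y by simp
      qed
      moreover have "S \<noteq> {1..N}"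
      proof
        assume "S = {1..N}"
        then have "x - y \<in> orthogonal_comp (span (phi ` {1..N}))"
          by (intro in_orth_span) (auto simp: S_def)
        then have "(x - y) \<bullet> (x - y) = 0" using assms(1)
          by (auto simp: orthogonal_comp_def orthogonal_def)
        then show False using y by simp
      qed
      moreover have "S \<subseteq> {1..N}" by (auto simp: S_def)
      moreover have "x = (1/2) *\<^sub>R (x - y) + (1/2) *\<^sub>R (x + y)"
      proof -
        have "(1/2) *\<^sub>R (x - y) + (1/2) *\<^sub>R (x + y) = (1/2::real) *\<^sub>R ((x - y) + (x + y))"
          by (simp only: scaleR_add_right)
        also have "(x - y) + (x + y) = (2::real) *\<^sub>R x" by (simp add: scaleR_2)
        finally show ?thesis by simp
      qed
      ultimately have PS: "?P S" and xS: "x \<in> ?Sum S" using u v by blast+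
      have "?Sum S \<in> ?Sum ` {S. ?P S}" using PS by simp
      then show "x \<in> B" unfolding B_def using xS by (rule UnionI)
    qed
  qed
qed

end
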